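(* Let $\mathbf{x}_t=\mathbf{x}+t\mathbf{v}$, $t=1,2,\dots$, with $\mathbf{v}\neq\mathbf{0}$, and let points $\mathbf{o}_q$ (access points) form a homogeneous Poisson point process on $\mathbb{R}^2$ of density $\kappa>0$. For $0<r_0<R$, let $\mathcal{Q}_t$ be the set of points with $r_0\le\|\mathbf{d}_{t,q}\|\le R$, where $\mathbf{d}_{t,q}=\mathbf{x}_t-\mathbf{o}_q$, and let $d_{t,q,1}$ be the component of $\mathbf{d}_{t,q}$ along $\mathbf{v}$. Define $$\tilde{\mathbf{A}}_{T,x}=\sum_{t=1}^T\mathbb{E}\Big\{\sum_{q\in\mathcal{Q}_t}\frac{d_{t,q,1}^2}{\|\mathbf{d}_{t,q}\|^8}\big(\|\mathbf{d}_{t,q}\|^2\mathbf{I}-\mathbf{d}_{t,q}\mathbf{d}_{t,q}^{\mathrm T}\big)\Big\},$$ the expectation being over the point process. Then $\frac1T\lambda_{\min}(\tilde{\mathbf{A}}_{T,x})\to\frac18\pi\kappa\big(\frac1{r_0^2}-\frac1{R^2}\big)$ as $T\to\infty$.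
   Context: The condition $\|\mathbf{d}_{t,q}\|\ge r_0$ encodes the paper's assumption that every access point used at time $t$ is at distance at least $r_0$ from the user. *)

theory Defs
  imports "HOL-Analysis.Analysis" "HOL-Probability.Probability"
begin

definition poisson_point_process ::
  "'s measure \<Rightarrow> ('s \<Rightarrow> (real^2) set) \<Rightarrow> real \<Rightarrow> bool" where
  "poisson_point_process M Phi kappa \<longleftrightarrow>
     prob_space M \<and>
     (\<forall>\<omega>\<in>space M. \<forall>B. bounded B \<longrightarrow> finite (Phi \<omega> \<inter> B)) \<and>
     (\<forall>B. B \<in> sets lborel \<and> bounded B \<longrightarrow>
        (\<lambda>\<omega>. card (Phi \<omega> \<inter> B)) \<in> measurable M (count_space UNIV) \<and>
        (\<forall>k::nat. measure M {\<omega>\<in>space M. card (Phi \<omega> \<inter> B) = k} =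
            (kappa * measure lborel B) ^ k / fact k * exp (- (kappa * measure lborel B)))) \<and>
     (\<forall>(I::nat set) B. finite I \<and> disjoint_family_on B I \<and>
        (\<forall>i\<in>I. B i \<in> sets lborel \<and> bounded (B i)) \<longrightarrow>
        prob_space.indep_vars M (\<lambda>_. count_space UNIV) (\<lambda>i \<omega>. card (Phi \<omega> \<inter> B i)) I)"

definition lambda_min :: "real^'n^'n \<Rightarrow> real" where
  "lambda_min A = Min {l. \<exists>u. u \<noteq> 0 \<and> A *v u = l *\<^sub>R u}"

definition summand :: "real^2 \<Rightarrow> real^2 \<Rightarrow> real^2^2" where
  "summand v d = (((d \<bullet> v) / norm v)\<^sup>2 / norm d ^ 8) *\<^sub>R
      ((norm d)\<^sup>2 *\<^sub>R mat 1 - (\<chi> i j. d $ i * d $ j))"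

definition A_tilde ::
  "'s measure \<Rightarrow> ('s \<Rightarrow> (real^2) set) \<Rightarrow> real \<Rightarrow> real \<Rightarrow> real^2 \<Rightarrow> real^2 \<Rightarrow> nat \<Rightarrow> real^2^2" where
  "A_tilde M Phi r0 R x v T =
     (\<Sum>t=1..T. \<integral>\<omega>. (\<Sum>p\<in>{p \<in> Phi \<omega>. r0 \<le> norm ((x + real t *\<^sub>R v) - p) \<and>
                                     norm ((x + real t *\<^sub>R v) - p) \<le> R}.
                       summand v ((x + real t *\<^sub>R v) - p)) \<partial>M)"

end

theory Submission
  imports Defs
begin
definition L2 :: "real^2 \<Rightarrow> real^2 \<Rightarrow> real^2 \<Rightarrow> real^2" where
  "L2 u w e = vector [e \<bullet> u, e \<bullet> w]"
definition L2' :: "real^2 \<Rightarrow> real^2 \<Rightarrow> real^2 \<Rightarrow> real^2" where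
  "L2' u w z = (z$1) *\<^sub>R u + (z$2) *\<^sub>R w"

lemma inner2: "(x::real^2) \<bullet> y = x$1 * y$1 + x$2 * y$2"
  by (simp add: inner_vec_def sum_2)

lemma orth2_aux:
  fixes a b c d :: real
  assumes "a*a+b*b = 1" "c*c+d*d=1" "a*c+b*d = 0"
  shows "a*a + c*c = 1" "a*b+c*d = 0" "b*b+d*d = 1"
  using assms by algebra+

lemma L2_L2':
  fixes u w :: "real^2"
  assumes "u\<bullet>u = 1" "w\<bullet>w=1" "u\<bullet>w=0"
  shows "L2 u w (L2' u w z) = z" "L2' u w (L2 u w e) = e"
proof -
  show "L2 u w (L2' u w z) = z"
    using assms inner_commute[of w u] by (simp add: L2_def L2'_def vec_eq_iff forall_2 inner_add_left)
  have o: "u$1*u$1 + w$1*w$1 = 1" "u$1*u$2+w$1*w$2 = 0" "u$2*u$2+w$2*w$2 = 1"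
    using orth2_aux[of "u$1" "u$2" "w$1" "w$2"] assms by (auto simp: inner2)
  have "(e$1*u$1+e$2*u$2)*u$1 + (e$1*w$1+e$2*w$2)*w$1 = e$1*(u$1*u$1 + w$1*w$1) + e$2*(u$1*u$2+w$1*w$2)"
    "(e$1*u$1+e$2*u$2)*u$2 + (e$1*w$1+e$2*w$2)*w$2 = e$1*(u$1*u$2+w$1*w$2) + e$2*(u$2*u$2+w$2*w$2)"
    by algebra+
  with o show "L2' u w (L2 u w e) = e"
    unfolding L2_def L2'_def vec_eq_iff forall_2 by (simp add: inner2)
qed

lemma leb_lborel: "A \<in> sets borel \<Longrightarrow> emeasure lebesgue A = emeasure lborel A"
  by simp

lemma linear_L2: "linear (L2 u w)"
  by (rule linearI) (auto simp: L2_def vec_eq_iff forall_2 inner_add_left)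

lemma linear_L2': "linear (L2' u w)"
  by (rule linearI) (auto simp: L2'_def vec_eq_iff forall_2 algebra_simps)

lemma L2_meas[measurable]: "L2 u w \<in> borel_measurable borel"
  by (intro borel_measurable_continuous_onI linear_continuous_on linear_L2[THEN linear_conv_bounded_linear[THEN iffD1]])

lemma orth_L2':
  fixes u w :: "real^2"
  assumes "u\<bullet>u = 1" "w\<bullet>w=1" "u\<bullet>w=0"
  shows "orthogonal_transformation (L2' u w)"
  unfolding orthogonal_transformation_def
proof (intro conjI allI linear_L2')
  fix a b :: "real^2"
  have "L2' u w a \<bullet> L2' u w b = a$1*b$1*(u\<bullet>u) + a$1*b$2*(u\<bullet>w) + a$2*b$1*(w\<bullet>u) + a$2*b$2*(w\<bullet>w)"
    by (simp add: L2'_def inner_add_left inner_add_right algebra_simps)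
  also have "\<dots> = a \<bullet> b" using assms by (simp add: inner_commute inner2)
  finally show "L2' u w a \<bullet> L2' u w b = a \<bullet> b" .
qed

lemma lborel_L2:
  fixes u w :: "real^2"
  assumes o: "u\<bullet>u = 1" "w\<bullet>w=1" "u\<bullet>w=0"
  shows "distr lborel borel (L2 u w) = lborel"
proof -
  have "lborel = distr lborel borel (L2 u w)"
  proof (rule lborel_eqI)
    fix l h :: "real^2" assume le: "\<And>b. b\<in>Basis \<Longrightarrow> l\<bullet>b \<le> h\<bullet>b"
    have pre: "L2 u w -` box l h = L2' u w ` box l h"
      using L2_L2'[OF o] by (auto simp: image_def vimage_def) (metis)
    have B: "L2 u w -` box l h \<in> sets borel"
      using measurable_sets[OF L2_meas, of "box l h" u w] by simp
    have lm: "L2' u w ` box l h \<in> lmeasurable"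
      using measurable_orthogonal_image[OF orth_L2'[OF o] lmeasurable_box] .
    have "emeasure (distr lborel borel (L2 u w)) (box l h) = emeasure lborel (L2 u w -` box l h)"
      by (simp add: emeasure_distr)
    also have "\<dots> = emeasure lebesgue (L2' u w ` box l h)"
      using B pre by simp
    also have "\<dots> = ennreal (measure lebesgue (L2' u w ` box l h))"
      using lm by (metis emeasure_eq_ennreal_measure fmeasurableD2)
    also have "\<dots> = ennreal (measure lebesgue (box l h))"
      using measure_orthogonal_image[OF orth_L2'[OF o] lmeasurable_box] by simp
    also have "\<dots> = emeasure lebesgue (box l h)"
      using lmeasurable_box by (metis emeasure_eq_ennreal_measure fmeasurableD2)
    also have "\<dots> = (\<Prod>b\<in>Basis. (h - l) \<bullet> b)"
      using le by (simp add: emeasure_lborel_box_eq)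
    finally show "emeasure (distr lborel borel (L2 u w)) (box l h) = (\<Prod>b\<in>Basis. (h - l) \<bullet> b)" .
  qed simp
  then show ?thesis ..
qed

lemma integrable_bdd_on:
  fixes f :: "real^2 \<Rightarrow> real"
  assumes S: "S \<in> sets borel" "emeasure lborel S < \<infinity>"
    and f[measurable]: "f \<in> borel_measurable borel"
    and B: "\<And>x. x \<in> S \<Longrightarrow> \<bar>f x\<bar> \<le> B"
  shows "integrable lborel (\<lambda>x. indicator S x * f x)"
proof (rule Bochner_Integration.integrable_bound)
  have "0 \<le> B" if "S \<noteq> {}" using B that by fastforce
  show "integrable lborel (\<lambda>x. \<bar>B\<bar> * indicator S x)"
    using S by (intro integrable_mult_right integrable_real_indicator) auto
  show "(\<lambda>x. indicator S x * f x) \<in> borel_measurable lborel"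
    using S by measurable
  show "AE x in lborel. norm (indicator S x * f x) \<le> norm (\<bar>B\<bar> * indicator S x :: real)"
    using B by (auto simp: indicator_def abs_mult intro: order_trans[OF _ abs_ge_self])
qed

definition shell :: "real \<Rightarrow> real \<Rightarrow> (real^2) set" where
  "shell a b = {e. a < norm e \<and> norm e \<le> b}"

lemma shell_eq: "shell a b = cball 0 b - cball 0 a"
  by (auto simp: shell_def)

lemma shell_borel[measurable]: "shell a b \<in> sets borel"
  unfolding shell_eq by measurable

lemma emeasure_cball2: "0 \<le> r \<Longrightarrow> emeasure lborel (cball (0::real^2) r) = ennreal (pi * r^2)"
  by (simp add: emeasure_cball unit_ball_vol_2)

lemma emeasure_shell: assumes "0 \<le> a" "a \<le> b"
  shows "emeasure lborel (shell a b) = ennreal (pi * (b^2 - a^2))"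
proof -
  have "emeasure lborel (shell a b) = emeasure lborel (cball (0::real^2) b) - emeasure lborel (cball (0::real^2) a)"
    unfolding shell_eq using assms by (rule_tac Measure_Space.emeasure_Diff) (auto simp: emeasure_cball2)
  also have "\<dots> = ennreal (pi * (b^2 - a^2))"
    using assms by (simp add: emeasure_cball2 ennreal_minus[symmetric] right_diff_distrib power_mono)
  finally show ?thesis .
qed

lemma shell_finite: "0 \<le> a \<Longrightarrow> a \<le> b \<Longrightarrow> emeasure lborel (shell a b) < \<infinity>"
  by (simp add: emeasure_shell)

definition H :: "real \<Rightarrow> real \<Rightarrow> real" where
  "H a b = (\<integral>e. indicator (shell a b) e * (1 / norm e ^ 4) \<partial>lborel)"

lemma H_integrable: assumes "0 < a" "a \<le> b"
  shows "integrable lborel (\<lambda>e. indicator (shell a b) e * (1 / norm (e::real^2) ^ 4))"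
proof (rule integrable_bdd_on[where B="1/a^4"])
  show "emeasure lborel (shell a b) < \<infinity>" using assms by (intro shell_finite) auto
  fix x :: "real^2" assume "x \<in> shell a b"
  then have "a < norm x" by (auto simp: shell_def)
  then show "\<bar>1 / norm x ^ 4\<bar> \<le> 1 / a ^ 4"
    using assms by (simp add: frac_le power_mono)
qed auto

lemma H_bounds: assumes "0 < a" "a \<le> b"
  shows "pi * (b^2 - a^2) / b^4 \<le> H a b" "H a b \<le> pi * (b^2 - a^2) / a^4"
proof -
  have m: "measure lborel (shell a b) = pi * (b^2 - a^2)"
    using assms emeasure_shell[of a b] by (simp add: measure_def power_mono)
  have i: "integrable lborel (\<lambda>e. indicator (shell a b) e * (c::real))" for c
    using shell_finite[of a b] assms by (intro integrable_mult_left integrable_real_indicator) auto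
  have "(\<integral>e. indicator (shell a b) e * (1/b^4) \<partial>lborel) \<le> H a b"
    unfolding H_def
  proof (intro integral_mono i H_integrable assms)
    fix x :: "real^2"
    show "indicator (shell a b) x * (1 / b ^ 4) \<le> indicator (shell a b) x * (1 / norm x ^ 4)"
      using assms by (auto simp: indicator_def shell_def intro!: frac_le power_mono)
  qed
  then show "pi * (b^2 - a^2) / b^4 \<le> H a b" using m by simp
  have "H a b \<le> (\<integral>e. indicator (shell a b) e * (1/a^4) \<partial>lborel)"
    unfolding H_def
  proof (intro integral_mono i H_integrable assms)
    fix x :: "real^2"
    show "indicator (shell a b) x * (1 / norm x ^ 4) \<le> indicator (shell a b) x * (1 / a ^ 4)"
      using assms by (auto simp: indicator_def shell_def intro!: frac_le power_mono)
  qed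
  then show "H a b \<le> pi * (b^2 - a^2) / a^4" using m by simp
qed

lemma H_add: assumes "0 < a" "a \<le> b" "b \<le> c"
  shows "H a c = H a b + H b c"
proof -
  have "indicator (shell a c) e * (1 / norm e ^ 4) =
    indicator (shell a b) e * (1 / norm e ^ 4) + indicator (shell b c) e * (1 / norm (e::real^2) ^ 4)" for e
    using assms by (auto simp: indicator_def shell_def)
  then have "H a c = (\<integral>e. indicator (shell a b) e * (1 / norm e ^ 4) + indicator (shell b c) e * (1 / norm (e::real^2) ^ 4) \<partial>lborel)"
    unfolding H_def by presburger
  also have "\<dots> = H a b + H b c"
    unfolding H_def using assms by (intro Bochner_Integration.integral_add H_integrable) auto
  finally show ?thesis .
qed

lemma lborel_scale_integral:
  fixes f :: "real^2 \<Rightarrow> real"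
  assumes c: "0 < c" and f[measurable]: "f \<in> borel_measurable borel"
  shows "(\<integral>x. f x \<partial>lborel) = c^2 * (\<integral>x. f (c *\<^sub>R x) \<partial>lborel)"
proof -
  have e: "lborel = density (distr lborel borel (\<lambda>x. (0::real^2) + c *\<^sub>R x)) (\<lambda>_. ennreal (\<bar>c\<bar>^DIM(real^2)))"
    using c by (intro lborel_affine) auto
  have "(\<integral>x. f x \<partial>lborel) = (\<integral>x. f x \<partial>density (distr lborel borel (\<lambda>x. (0::real^2) + c *\<^sub>R x)) (\<lambda>_. ennreal (\<bar>c\<bar>^DIM(real^2))))"
    by (rule arg_cong[where f="\<lambda>M. integral\<^sup>L M f", OF e])
  also have "\<dots> = (\<integral>x. \<bar>c\<bar>^DIM(real^2) * f x \<partial>distr lborel borel (\<lambda>x. 0 + c *\<^sub>R x))"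
    by (subst integral_density) auto
  also have "\<dots> = (\<integral>x. \<bar>c\<bar>^DIM(real^2) * f (0 + c *\<^sub>R x) \<partial>lborel)"
    by (subst integral_distr) auto
  also have "\<dots> = c^2 * (\<integral>x. f (c *\<^sub>R x) \<partial>lborel)"
    using c by simp
  finally show ?thesis .
qed

lemma H_scale: assumes "0 < c" "0 < a" "a \<le> b"
  shows "H (c*a) (c*b) = H a b / c^2"
proof -
  have "H (c*a) (c*b) = c^2 * (\<integral>x. indicator (shell (c*a) (c*b)) (c *\<^sub>R x) * (1 / norm (c *\<^sub>R x) ^ 4) \<partial>lborel)"
    unfolding H_def by (rule lborel_scale_integral[OF assms(1)]) measurable
  also have "(\<lambda>x::real^2. indicator (shell (c*a) (c*b)) (c *\<^sub>R x) * (1 / norm (c *\<^sub>R x) ^ 4)) =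
     (\<lambda>x. (1/c^4) * (indicator (shell a b) x * (1 / norm x ^ 4)))"
    using assms by (auto simp: fun_eq_iff indicator_def shell_def power_mult_distrib)
  also have "c^2 * (\<integral>x. (1/c^4) * (indicator (shell a b) x * (1 / norm x ^ 4)) \<partial>lborel) = H a b / c^2"
    unfolding H_def integral_mult_right_zero using assms by (simp add: field_simps power2_eq_square power4_eq_xxxx)
  finally show ?thesis .
qed

lemma H_fun: assumes "1 \<le> s" "1 \<le> t"
  shows "H 1 (s*t) = H 1 s + H 1 t / s^2"
proof -
  have "H 1 (s*t) = H 1 s + H s (s*t)"
    using assms by (intro H_add) (auto simp: mult_le_cancel_left1)
  also have "H s (s*t) = H (s*1) (s*t)" by simp
  also have "\<dots> = H 1 t / s^2" using assms by (intro H_scale) auto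
  finally show ?thesis .
qed

lemma H_one: assumes "1 \<le> s" shows "H 1 s = (4/3 * H 1 2) * (1 - 1/s^2)"
proof -
  have "H 1 (s*2) = H 1 s + H 1 2 / s^2" using assms by (intro H_fun) auto
  moreover have "H 1 (2 * s) = H 1 2 + H 1 s / 4" using H_fun[of 2 s] assms by simp
  ultimately have "H 1 s + H 1 2 / s^2 = H 1 2 + H 1 s / 4" by (simp add: mult.commute)
  then show ?thesis using assms by (simp add: field_simps)
qed

lemma H_one_C: "4/3 * H 1 2 = pi"
proof -
  define C where "C = 4/3 * H 1 2"
  have b: "pi / s^2 \<le> C \<and> C \<le> pi * s^2" if "1 < s" for s
  proof -
    have s2: "1 < s^2" using that by (simp add: one_less_power)
    have "pi * (s^2 - 1^2) / s^4 \<le> H 1 s" "H 1 s \<le> pi * (s^2 - 1^2) / 1^4"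
      using H_bounds[of 1 s] that by auto
    moreover have "H 1 s = C * ((s^2 - 1) / s^2)"
      using H_one[of s] that by (simp add: C_def field_simps)
    ultimately have "pi * (s^2 - 1) / s^4 \<le> C * ((s^2 - 1) / s^2)" "C * ((s^2 - 1) / s^2) \<le> pi * (s^2 - 1)"
      by auto
    moreover have "(pi / s^2) * ((s^2 - 1) / s^2) = pi * (s^2 - 1) / s^4"
      by (simp add: power4_eq_xxxx power2_eq_square)
    moreover have "(pi * s^2) * ((s^2 - 1) / s^2) = pi * (s^2 - 1)"
      using s2 that by (simp add: divide_simps)
    ultimately have "(pi / s^2) * ((s^2 - 1) / s^2) \<le> C * ((s^2 - 1) / s^2)" "C * ((s^2 - 1) / s^2) \<le> (pi * s^2) * ((s^2 - 1) / s^2)"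
      by auto
    moreover have "0 < (s^2 - 1) / s^2" using s2 by (intro divide_pos_pos) auto
    ultimately show ?thesis by (meson mult_le_cancel_right_pos)
  qed
  have "C \<le> pi"
  proof (rule ccontr)
    assume "\<not> C \<le> pi"
    define r where "r = C/pi"
    define s where "s = sqrt ((1 + r)/2)"
    have q: "1 < r" using \<open>\<not> C \<le> pi\<close> by (simp add: field_simps r_def)
    have s2: "s^2 = (1 + r)/2" unfolding s_def using q by (intro real_sqrt_pow2) auto
    have "1 < s" unfolding s_def using q by (simp add: real_less_rsqrt)
    then have "C \<le> pi * s^2" using b by blast
    also have "\<dots> < pi * r" unfolding s2 using q by (simp add: field_simps)
    also have "pi * r = C" by (simp add: r_def)
    finally show False by simp
  qed
  moreover have "pi \<le> C"
  proof (rule ccontr)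
    assume "\<not> pi \<le> C"
    have "pi / 2^2 \<le> C" using b[of 2] by simp
    then have Cp: "0 < C" using pi_gt_zero by (smt (verit) divide_pos_pos zero_less_power)
    define r where "r = pi/C"
    define s where "s = sqrt ((1 + r)/2)"
    have q: "1 < r" using \<open>\<not> pi \<le> C\<close> Cp by (simp add: field_simps r_def)
    have s2: "s^2 = (1 + r)/2" unfolding s_def using q by (intro real_sqrt_pow2) auto
    have "1 < s" unfolding s_def using q by (simp add: real_less_rsqrt)
    then have "pi / s^2 \<le> C" using b by blast
    moreover have "C < pi / s^2" unfolding s2 using q Cp by (simp add: field_simps r_def)
    ultimately show False by simp
  qed
  ultimately show ?thesis unfolding C_def by simp
qed

lemma H_val: assumes "0 < a" "a \<le> b" shows "H a b = pi * (1/a^2 - 1/b^2)"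
proof -
  have "H a b = H (a*1) (a*(b/a))" using assms by simp
  also have "\<dots> = H 1 (b/a) / a^2" using assms by (intro H_scale) auto
  also have "H 1 (b/a) = pi * (1 - 1/(b/a)^2)"
    using H_one[of "b/a"] H_one_C assms by simp
  finally show ?thesis using assms by (simp add: field_simps)
qed

definition ann :: "real \<Rightarrow> real \<Rightarrow> (real^2) set" where
  "ann a b = {e. a \<le> norm e \<and> norm e \<le> b}"

lemma ann_eq: "ann a b = cball 0 b - ball 0 a"
  by (auto simp: ann_def)

lemma ann_borel[measurable]: "ann a b \<in> sets borel"
  unfolding ann_eq by measurable

lemma ann_compact: "compact (ann a b)"
  unfolding ann_eq by (intro compact_diff) auto

lemma ann_finite: "emeasure lborel (ann a b) < \<infinity>"
proof -
  have "emeasure lborel (ann a b) \<le> emeasure lborel (cball (0::real^2) \<bar>b\<bar>)"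
    by (intro emeasure_mono) (auto simp: ann_def)
  also have "\<dots> < \<infinity>" by (simp add: emeasure_cball2)
  finally show ?thesis .
qed

definition IA :: "real \<Rightarrow> real \<Rightarrow> (real \<Rightarrow> real \<Rightarrow> real) \<Rightarrow> real" where
  "IA a b F = (\<integral>e. indicator (ann a b) e * (F (e$1) (e$2) / norm e ^ 8) \<partial>lborel)"

lemma norm_L2:
  fixes u w :: "real^2"
  assumes o: "u\<bullet>u = 1" "w\<bullet>w=1" "u\<bullet>w=0"
  shows "norm (L2 u w e) = norm e"
proof -
  have "norm (L2' u w (L2 u w e)) = norm (L2 u w e)"
    using orth_L2'[OF o] orthogonal_transformation_norm by blast
  then show ?thesis using L2_L2'[OF o] by simp
qed

lemma norm2_split:
  fixes u w :: "real^2"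
  assumes o: "u\<bullet>u = 1" "w\<bullet>w=1" "u\<bullet>w=0"
  shows "(norm e)^2 = (e\<bullet>u)^2 + (e\<bullet>w)^2"
proof -
  have "(norm e)^2 = (norm (L2 u w e))^2" using norm_L2[OF o] by simp
  also have "\<dots> = (e\<bullet>u)^2 + (e\<bullet>w)^2"
    unfolding power2_norm_eq_inner by (simp add: L2_def inner2 power2_eq_square)
  finally show ?thesis .
qed

lemma IA_rot:
  fixes u w :: "real^2"
  assumes o: "u\<bullet>u = 1" "w\<bullet>w=1" "u\<bullet>w=0"
    and F[measurable]: "(\<lambda>e::real^2. F (e$1) (e$2)) \<in> borel_measurable borel"
  shows "(\<integral>e. indicator (ann a b) e * (F (e\<bullet>u) (e\<bullet>w) / norm e ^ 8) \<partial>lborel) = IA a b F"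
proof -
  let ?g = "\<lambda>e::real^2. indicator (ann a b) e * (F (e$1) (e$2) / norm e ^ 8)"
  have g[measurable]: "?g \<in> borel_measurable borel" by measurable
  have "IA a b F = integral\<^sup>L (distr lborel borel (L2 u w)) ?g"
    unfolding IA_def lborel_L2[OF o] ..
  also have "\<dots> = (\<integral>e. ?g (L2 u w e) \<partial>lborel)"
    by (intro integral_distr) auto
  also have "\<dots> = (\<integral>e. indicator (ann a b) e * (F (e\<bullet>u) (e\<bullet>w) / norm e ^ 8) \<partial>lborel)"
    using norm_L2[OF o] by (simp add: L2_def ann_def indicator_def)
  finally show ?thesis ..
qed

lemma IA_int:
  assumes a: "0 < a" and F: "continuous_on UNIV (\<lambda>e::real^2. F (e$1) (e$2))"
  shows "integrable lborel (\<lambda>e. indicator (ann a b) e * (F (e$1) (e$2) / norm e ^ 8))"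
proof -
  have c1: "continuous_on (ann a b) (\<lambda>e::real^2. F (e$1) (e$2))"
    using F continuous_on_subset by blast
  have c2: "continuous_on (ann a b) (\<lambda>e::real^2. norm e ^ 8)"
    by (intro continuous_intros)
  have "continuous_on (ann a b) (\<lambda>e::real^2. F (e$1) (e$2) / norm e ^ 8)"
    using c1 c2 by (rule continuous_on_divide) (use a in \<open>auto simp: ann_def\<close>)
  from borel_integrable_compact[OF ann_compact this] show ?thesis by simp
qed

lemma IA_add:
  assumes "integrable lborel (\<lambda>e. indicator (ann a b) e * (F (e$1) (e$2) / norm e ^ 8))"
    "integrable lborel (\<lambda>e. indicator (ann a b) e * (G (e$1) (e$2) / norm e ^ 8))"
  shows "IA a b (\<lambda>x y. F x y + G x y) = IA a b F + IA a b G"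
proof -
  have "IA a b (\<lambda>x y. F x y + G x y) = (\<integral>e. indicator (ann a b) e * (F (e$1) (e$2) / norm e ^ 8) + indicator (ann a b) e * (G (e$1) (e$2) / norm e ^ 8) \<partial>lborel)"
    unfolding IA_def by (simp add: add_divide_distrib distrib_left)
  also have "\<dots> = IA a b F + IA a b G"
    unfolding IA_def using assms by (rule Bochner_Integration.integral_add)
  finally show ?thesis .
qed

lemma IA_mult: "IA a b (\<lambda>x y. c * F x y) = c * IA a b F"
proof -
  have eq: "(\<lambda>e. indicator (ann a b) e * (c * F (e$1) (e$2) / norm e ^ 8)) =
     (\<lambda>e. c * (indicator (ann a b) e * (F (e$1) (e$2) / norm e ^ 8)))"
    by (auto simp: fun_eq_iff)
  show ?thesis unfolding IA_def eq integral_mult_right_zero ..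
qed

lemma IA_cong: "(\<And>x y. F x y = G x y) \<Longrightarrow> IA a b F = IA a b G"
  by presburger

lemma IA_swap: "(\<lambda>e::real^2. F (e$1) (e$2)) \<in> borel_measurable borel \<Longrightarrow> IA a b (\<lambda>x y. F y x) = IA a b F"
  using IA_rot[of "vector [0,1]" "vector [1,0]" F a b]
  by (simp add: inner2 IA_def)

lemma IA_refl: "(\<lambda>e::real^2. F (e$1) (e$2)) \<in> borel_measurable borel \<Longrightarrow> IA a b (\<lambda>x y. F x (-y)) = IA a b F"
  using IA_rot[of "vector [1,0]" "vector [0,-1]" F a b]
  by (simp add: inner2 IA_def)

lemma IA_45: "(\<lambda>e::real^2. F (e$1) (e$2)) \<in> borel_measurable borel \<Longrightarrow>
   IA a b (\<lambda>x y. F ((x+y) / sqrt 2) ((x-y) / sqrt 2)) = IA a b F"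
proof -
  assume m: "(\<lambda>e::real^2. F (e$1) (e$2)) \<in> borel_measurable borel"
  let ?u = "vector [1/sqrt 2, 1/sqrt 2] :: real^2" and ?w = "vector [1/sqrt 2, -1/sqrt 2] :: real^2"
  have o: "?u \<bullet> ?u = 1" "?w \<bullet> ?w = 1" "?u \<bullet> ?w = 0"
    by (simp_all add: inner2 power2_eq_square[symmetric] power_divide)
  have "e \<bullet> ?u = (e$1 + e$2) / sqrt 2" "e \<bullet> ?w = (e$1 - e$2) / sqrt 2" for e :: "real^2"
    by (simp_all add: inner2 field_simps)
  then show ?thesis using IA_rot[OF o m, of a b] by (simp add: IA_def)
qed

lemma sphere_null: "sphere (0::real^2) r \<in> null_sets lborel"
proof -
  have "emeasure lebesgue (sphere (0::real^2) r) = 0"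
    using negligible_iff_emeasure0[of "sphere (0::real^2) r"] negligible_sphere by auto
  then have "emeasure lborel (sphere (0::real^2) r) = 0" by simp
  then show ?thesis by (intro null_setsI) auto
qed

lemma pow_aux: "0 < (n::real) \<Longrightarrow> ((n^2)^2) / n^8 = 1 / n^4"
proof -
  assume "0 < n"
  have "n^8 = n^4 * n^4" by (simp flip: power_add)
  moreover have "(n^2)^2 = n^4" by (simp flip: power_mult)
  ultimately show ?thesis using \<open>0 < n\<close> by (simp add: divide_simps)
qed

lemma lin_aux: "(P::real) + 2*M + P = Rd \<Longrightarrow> M = 1/4*(P-2*M+P) \<Longrightarrow> M = Rd/8 \<and> P = 3*Rd/8"
  by (auto simp add: field_simps)

lemma IA_rad: assumes "0 < a" "a \<le> b" shows "IA a b (\<lambda>x y. (x^2+y^2)^2) = pi * (1/a^2 - 1/b^2)"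
proof -
  have n: "(e$1)^2 + (e$2)^2 = (norm e)^2" for e :: "real^2"
    unfolding power2_norm_eq_inner by (simp add: inner2 power2_eq_square)
  have "IA a b (\<lambda>x y. (x^2+y^2)^2) = (\<integral>e. indicator (ann a b) e * (1 / norm e ^ 4) \<partial>lborel)"
    unfolding IA_def n
  proof (intro Bochner_Integration.integral_cong refl)
    fix e :: "real^2"
    show "indicator (ann a b) e * (((norm e)^2)^2 / norm e ^ 8) = indicator (ann a b) e * (1 / norm e ^ 4)"
    proof (cases "e \<in> ann a b")
      case True
      then have "0 < norm e" using assms by (auto simp: ann_def)
      then show ?thesis using True pow_aux[of "norm e"] by simp
    qed simp
  qed
  also have "\<dots> = H a b" unfolding H_def
  proof (intro integral_cong_AE)
    show "AE e in lborel. indicator (ann a b) e * (1 / norm e ^ 4) = indicator (shell a b) e * (1 / norm (e::real^2) ^ 4)"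
      using AE_not_in[OF sphere_null[of a]]
      by eventually_elim (auto simp: ann_def shell_def indicator_def)
  qed measurable
  also have "\<dots> = pi * (1/a^2 - 1/b^2)" using H_val assms by simp
  finally show ?thesis .
qed

lemma IA_vals: assumes a: "0 < a" and ab: "a \<le> b"
  shows "IA a b (\<lambda>x y. x^2*y^2) = pi*(1/a^2-1/b^2)/8"
    "IA a b (\<lambda>x y. x^4) = 3*pi*(1/a^2-1/b^2)/8"
    "IA a b (\<lambda>x y. x^3*y) = 0"
proof -
  define P where "P = IA a b (\<lambda>x y. x^4)"
  define M where "M = IA a b (\<lambda>x y. x^2*y^2)"
  define X where "X = IA a b (\<lambda>x y. x^3*y)"
  have iP: "integrable lborel (\<lambda>e. indicator (ann a b) e * ((e$1)^4 / norm e ^ 8))"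
    using IA_int[OF a, of "\<lambda>x y. x^4"] by (simp add: continuous_intros)
  have iQ: "integrable lborel (\<lambda>e. indicator (ann a b) e * ((e$2)^4 / norm e ^ 8))"
    using IA_int[OF a, of "\<lambda>x y. y^4"] by (simp add: continuous_intros)
  have iM: "integrable lborel (\<lambda>e. indicator (ann a b) e * ((-2)*((e$1)^2*(e$2)^2) / norm e ^ 8))"
    using IA_int[OF a, of "\<lambda>x y. (-2)*(x^2*y^2)"] by (simp add: continuous_intros)
  have iM2: "integrable lborel (\<lambda>e. indicator (ann a b) e * (2*((e$1)^2*(e$2)^2) / norm e ^ 8))"
    using IA_int[OF a, of "\<lambda>x y. 2*(x^2*y^2)"] by (simp add: continuous_intros)
  have iPM: "integrable lborel (\<lambda>e. indicator (ann a b) e * (((e$1)^4 + 2*((e$1)^2*(e$2)^2)) / norm e ^ 8))"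
    using IA_int[OF a, of "\<lambda>x y. x^4 + 2*(x^2*y^2)"] by (simp add: continuous_intros)
  have iPM2: "integrable lborel (\<lambda>e. indicator (ann a b) e * (((e$1)^4 + (-2)*((e$1)^2*(e$2)^2)) / norm e ^ 8))"
    using IA_int[OF a, of "\<lambda>x y. x^4 + (-2)*(x^2*y^2)"] by (simp add: continuous_intros)
  have QP: "IA a b (\<lambda>x y. y^4) = P"
    unfolding P_def by (rule IA_swap[of "\<lambda>x y. x^4"]) measurable
  have "IA a b (\<lambda>x y. (x^2+y^2)^2) = IA a b (\<lambda>x y. (x^4 + 2*(x^2*y^2)) + y^4)"
    by (rule IA_cong) (simp add: power2_eq_square power4_eq_xxxx algebra_simps)
  also have "\<dots> = IA a b (\<lambda>x y. x^4 + 2*(x^2*y^2)) + IA a b (\<lambda>x y. y^4)"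
    by (rule IA_add[OF iPM iQ])
  also have "IA a b (\<lambda>x y. x^4 + 2*(x^2*y^2)) = P + 2 * M"
    unfolding P_def M_def using IA_add[OF iP iM2] IA_mult[of a b 2] by simp
  finally have R: "P + 2*M + P = pi * (1/a^2 - 1/b^2)"
    using IA_rad[OF a ab] QP by simp
  have "M = IA a b (\<lambda>x y. ((x+y) / sqrt 2)^2 * ((x-y) / sqrt 2)^2)"
    unfolding M_def by (rule IA_45[symmetric]) measurable
  also have "\<dots> = IA a b (\<lambda>x y. (1/4) * ((x^4 + (-2)*(x^2*y^2)) + y^4))"
    by (rule IA_cong) (simp add: power_divide power2_eq_square power4_eq_xxxx field_simps)
  also have "\<dots> = (1/4) * IA a b (\<lambda>x y. (x^4 + (-2)*(x^2*y^2)) + y^4)"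
    by (rule IA_mult)
  also have "IA a b (\<lambda>x y. (x^4 + (-2)*(x^2*y^2)) + y^4) = IA a b (\<lambda>x y. x^4 + (-2)*(x^2*y^2)) + IA a b (\<lambda>x y. y^4)"
    by (rule IA_add[OF iPM2 iQ])
  also have "IA a b (\<lambda>x y. x^4 + (-2)*(x^2*y^2)) = P - 2 * M"
    unfolding P_def M_def using IA_add[OF iP iM] IA_mult[of a b "-2"] by simp
  finally have M45: "M = (1/4) * (P - 2*M + P)" using QP by simp
  show "IA a b (\<lambda>x y. x^2*y^2) = pi*(1/a^2-1/b^2)/8"
    using lin_aux[OF R M45] unfolding M_def[symmetric] by simp
  show "IA a b (\<lambda>x y. x^4) = 3*pi*(1/a^2-1/b^2)/8"
    using lin_aux[OF R M45] unfolding P_def[symmetric] by simp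
  have "X = IA a b (\<lambda>x y. x^3*(-y))"
    unfolding X_def by (rule IA_refl[symmetric]) measurable
  also have "\<dots> = IA a b (\<lambda>x y. (-1) * (x^3*y))" by (rule IA_cong) simp
  also have "\<dots> = - X" unfolding X_def IA_mult by simp
  finally show "IA a b (\<lambda>x y. x^3*y) = 0" unfolding X_def[symmetric] by simp
qed

lemma qf_bounded_linear: "bounded_linear (\<lambda>A::real^2^2. a \<bullet> (A *v b))"
proof -
  have "linear (\<lambda>A::real^2^2. a \<bullet> (A *v b))"
    by (rule linearI) (simp_all add: matrix_vector_mult_add_rdistrib inner_add_right
         scaleR_matrix_vector_assoc[symmetric])
  then show ?thesis by (simp add: linear_conv_bounded_linear)
qed

lemma outer_mult: "(\<chi> i j. d $ i * d $ j) *v b = (d \<bullet> b) *\<^sub>R (d::real^2)"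
  by (simp add: vec_eq_iff matrix_vector_mult_def inner2 forall_2 sum_2 algebra_simps)

lemma summand_qf:
  assumes "v \<noteq> 0"
  shows "a \<bullet> (summand v e *v b) = (e \<bullet> (v /\<^sub>R norm v))^2 / norm e ^ 8 * ((norm e)^2 * (a \<bullet> b) - (e \<bullet> a) * (e \<bullet> b))"
proof -
  have "summand v e *v b = ((e \<bullet> (v /\<^sub>R norm v))^2 / norm e ^ 8) *\<^sub>R ((norm e)^2 *\<^sub>R b - (e \<bullet> b) *\<^sub>R e)"
    unfolding summand_def
    by (simp add: scaleR_matrix_vector_assoc[symmetric] matrix_vector_mult_diff_rdistrib
        matrix_vector_mul_lid outer_mult divide_inverse_commute)
  then show ?thesis by (simp add: inner_diff_right inner_commute)
qed

lemma summand_cont: "continuous_on (ann a b) (summand v)" if "0 < a" "v \<noteq> 0"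
proof -
  have c1: "continuous_on (ann a b) (\<lambda>e::real^2. ((e \<bullet> v) / norm v)^2)"
    by (intro continuous_intros) (use that in auto)
  have c2: "continuous_on (ann a b) (\<lambda>e::real^2. norm e ^ 8)"
    by (intro continuous_intros)
  have c: "continuous_on (ann a b) (\<lambda>e::real^2. ((e \<bullet> v) / norm v)^2 / norm e ^ 8)"
    using c1 c2 by (rule continuous_on_divide) (use that in \<open>auto simp: ann_def\<close>)
  have m0: "continuous_on (ann a b) (\<lambda>e::real^2. (\<chi> i j. e $ i * e $ j))"
    by (intro continuous_on_vec_lambda continuous_intros)
  have m: "continuous_on (ann a b) (\<lambda>e::real^2. (norm e)^2 *\<^sub>R mat 1 - (\<chi> i j. e $ i * e $ j))"
    using m0 by (intro continuous_intros)
  show ?thesis unfolding summand_def[abs_def] using c m by (rule continuous_on_scaleR)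
qed

definition Kmat :: "real \<Rightarrow> real \<Rightarrow> real^2 \<Rightarrow> real^2^2" where
  "Kmat a b v = (\<integral>e. indicator (ann a b) e *\<^sub>R summand v e \<partial>lborel)"

lemma Kmat_int: "0 < a \<Longrightarrow> v \<noteq> 0 \<Longrightarrow> integrable lborel (\<lambda>e. indicator (ann a b) e *\<^sub>R summand v e)"
  by (intro borel_integrable_compact ann_compact summand_cont)

lemma Kmat_qf: assumes "0 < a" "v \<noteq> 0"
  shows "x \<bullet> (Kmat a b v *v y) = (\<integral>e. indicator (ann a b) e *
     ((e \<bullet> (v /\<^sub>R norm v))^2 / norm e ^ 8 * ((norm e)^2 * (x \<bullet> y) - (e \<bullet> x) * (e \<bullet> y))) \<partial>lborel)"
proof -
  have "x \<bullet> (Kmat a b v *v y) = (\<integral>e. x \<bullet> ((indicator (ann a b) e *\<^sub>R summand v e) *v y) \<partial>lborel)"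
    unfolding Kmat_def
    by (rule integral_bounded_linear[OF qf_bounded_linear Kmat_int[OF assms(1,2)], symmetric])
  also have "\<dots> = (\<integral>e. indicator (ann a b) e *
     ((e \<bullet> (v /\<^sub>R norm v))^2 / norm e ^ 8 * ((norm e)^2 * (x \<bullet> y) - (e \<bullet> x) * (e \<bullet> y))) \<partial>lborel)"
    by (simp add: scaleR_matrix_vector_assoc[symmetric] summand_qf[OF assms(2)])
  finally show ?thesis .
qed

lemma decomp2:
  fixes u w :: "real^2"
  assumes o: "u\<bullet>u = 1" "w\<bullet>w=1" "u\<bullet>w=0"
  shows "z = (u \<bullet> z) *\<^sub>R u + (w \<bullet> z) *\<^sub>R w"
  using L2_L2'(2)[OF o, of z] by (simp add: L2_def L2'_def inner_commute)

lemma Kmat_uw: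
  assumes a: "0 < a" "a \<le> b" and v: "v \<noteq> 0"
  defines "u \<equiv> v /\<^sub>R norm v"
  defines "w \<equiv> vector [- (u$2), u$1] :: real^2"
  shows "Kmat a b v *v u = (pi*(1/a^2-1/b^2)/8) *\<^sub>R u"
    "Kmat a b v *v w = (3*pi*(1/a^2-1/b^2)/8) *\<^sub>R w"
    "u\<bullet>u = 1" "w\<bullet>w=1" "u\<bullet>w=0"
proof -
  show uu: "u\<bullet>u = 1" unfolding u_def using v by (simp add: dot_square_norm)
  then show ww: "w\<bullet>w = 1" unfolding w_def by (simp add: inner2 algebra_simps)
  show uw: "u\<bullet>w = 0" unfolding w_def by (simp add: inner2 algebra_simps)
  note o = uu ww uw
  have wu: "w \<bullet> u = 0" using uw by (simp add: inner_commute)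
  have ns: "(norm e)^2 = (e\<bullet>u)^2 + (e\<bullet>w)^2" for e using norm2_split[OF o] .
  have ns2: "norm e * norm e = (e\<bullet>u)*(e\<bullet>u) + (e\<bullet>w)*(e\<bullet>w)" for e
    using ns[of e] by (simp add: power2_eq_square)
  have m: "(\<lambda>e::real^2. F (e$1) (e$2)) \<in> borel_measurable borel" if "continuous_on UNIV (\<lambda>e::real^2. F (e$1) (e$2))" for F
    using that by (rule borel_measurable_continuous_onI)
  have "u \<bullet> (Kmat a b v *v u) = (\<integral>e. indicator (ann a b) e * ((\<lambda>x y. x^2*y^2) (e\<bullet>u) (e\<bullet>w) / norm e ^ 8) \<partial>lborel)"
    unfolding Kmat_qf[OF a(1) v] u_def[symmetric]
    by (intro Bochner_Integration.integral_cong refl) (simp add: uu ns2 power2_eq_square)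
  also have "\<dots> = IA a b (\<lambda>x y. x^2*y^2)"
    by (intro IA_rot o m) (intro continuous_intros)
  finally have kuu: "u \<bullet> (Kmat a b v *v u) = pi*(1/a^2-1/b^2)/8" using IA_vals(1)[OF a] by simp
  have "w \<bullet> (Kmat a b v *v u) = (\<integral>e. indicator (ann a b) e * ((\<lambda>x y. (-1) * (x^3*y)) (e\<bullet>u) (e\<bullet>w) / norm e ^ 8) \<partial>lborel)"
    unfolding Kmat_qf[OF a(1) v] u_def[symmetric]
    by (intro Bochner_Integration.integral_cong refl) (simp add: wu uw power2_eq_square power3_eq_cube inner_commute algebra_simps)
  also have "\<dots> = IA a b (\<lambda>x y. (-1) * (x^3*y))"
    by (intro IA_rot o m) (intro continuous_intros)
  finally have kwu: "w \<bullet> (Kmat a b v *v u) = 0" using IA_vals(3)[OF a] IA_mult[of a b "-1"] by simp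
  have "u \<bullet> (Kmat a b v *v w) = (\<integral>e. indicator (ann a b) e * ((\<lambda>x y. (-1) * (x^3*y)) (e\<bullet>u) (e\<bullet>w) / norm e ^ 8) \<partial>lborel)"
    unfolding Kmat_qf[OF a(1) v] u_def[symmetric]
    by (intro Bochner_Integration.integral_cong refl) (simp add: wu uw power2_eq_square power3_eq_cube inner_commute algebra_simps)
  also have "\<dots> = IA a b (\<lambda>x y. (-1) * (x^3*y))"
    by (intro IA_rot o m) (intro continuous_intros)
  finally have kuw: "u \<bullet> (Kmat a b v *v w) = 0" using IA_vals(3)[OF a] IA_mult[of a b "-1"] by simp
  have "w \<bullet> (Kmat a b v *v w) = (\<integral>e. indicator (ann a b) e * ((\<lambda>x y. x^4) (e\<bullet>u) (e\<bullet>w) / norm e ^ 8) \<partial>lborel)"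
    unfolding Kmat_qf[OF a(1) v] u_def[symmetric]
    by (intro Bochner_Integration.integral_cong refl) (simp add: ww ns2 power2_eq_square power4_eq_xxxx)
  also have "\<dots> = IA a b (\<lambda>x y. x^4)"
    by (rule IA_rot[OF o m[of "\<lambda>x y. x^4"]]) (intro continuous_intros)
  finally have kww: "w \<bullet> (Kmat a b v *v w) = 3*pi*(1/a^2-1/b^2)/8" using IA_vals(2)[OF a] by simp
  show "Kmat a b v *v u = (pi*(1/a^2-1/b^2)/8) *\<^sub>R u"
    using decomp2[OF o, of "Kmat a b v *v u"] kuu kwu by simp
  show "Kmat a b v *v w = (3*pi*(1/a^2-1/b^2)/8) *\<^sub>R w"
    using decomp2[OF o, of "Kmat a b v *v w"] kuw kww by simp
qed

lemma lambda_min_eq: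
  fixes B :: "real^2^2" and u w :: "real^2"
  assumes o: "u\<bullet>u = 1" "w\<bullet>w=1" "u\<bullet>w=0"
    and Bu: "B *v u = \<alpha> *\<^sub>R u" and Bw: "B *v w = \<beta> *\<^sub>R w" and ab: "\<alpha> \<le> \<beta>"
  shows "lambda_min B = \<alpha>"
proof -
  let ?E = "{l. \<exists>z. z \<noteq> 0 \<and> B *v z = l *\<^sub>R z}"
  have wu: "w \<bullet> u = 0" using o by (simp add: inner_commute)
  have sub: "?E \<subseteq> {\<alpha>, \<beta>}"
  proof
    fix l assume "l \<in> ?E"
    then obtain z where z: "z \<noteq> 0" "B *v z = l *\<^sub>R z" by auto
    have "B *v z = B *v ((u \<bullet> z) *\<^sub>R u + (w \<bullet> z) *\<^sub>R w)"
      using decomp2[OF o, of z] by simp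
    also have "\<dots> = (\<alpha> * (u \<bullet> z)) *\<^sub>R u + (\<beta> * (w \<bullet> z)) *\<^sub>R w"
      by (simp add: matrix_vector_right_distrib matrix_vector_mult_scaleR Bu Bw mult.commute)
    finally have eq: "l *\<^sub>R z = (\<alpha> * (u \<bullet> z)) *\<^sub>R u + (\<beta> * (w \<bullet> z)) *\<^sub>R w" using z by simp
    have e1: "l * (u \<bullet> z) = \<alpha> * (u \<bullet> z)"
      using arg_cong[OF eq, of "\<lambda>x. u \<bullet> x"] o by (simp add: inner_add_right)
    have e2: "l * (w \<bullet> z) = \<beta> * (w \<bullet> z)"
      using arg_cong[OF eq, of "\<lambda>x. w \<bullet> x"] o wu by (simp add: inner_add_right)
    have "u \<bullet> z \<noteq> 0 \<or> w \<bullet> z \<noteq> 0"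
      using decomp2[OF o, of z] z by auto
    then show "l \<in> {\<alpha>, \<beta>}" using e1 e2 by auto
  qed
  have "\<alpha> \<in> ?E"
  proof -
    have "u \<noteq> 0" using o by auto
    then show ?thesis using Bu by blast
  qed
  moreover have "finite ?E" using sub finite_subset by blast
  ultimately have "Min ?E = \<alpha>"
    using sub ab by (intro Min_eqI) auto
  then show ?thesis unfolding lambda_min_def .
qed

lemma ppp_unfold:
  assumes "poisson_point_process M Phi kappa"
  shows "prob_space M"
    "\<And>\<omega> B. \<omega> \<in> space M \<Longrightarrow> bounded B \<Longrightarrow> finite (Phi \<omega> \<inter> B)"
    "\<And>B. B \<in> sets lborel \<Longrightarrow> bounded B \<Longrightarrow> (\<lambda>\<omega>. card (Phi \<omega> \<inter> B)) \<in> measurable M (count_space UNIV)"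
    "\<And>B k. B \<in> sets lborel \<Longrightarrow> bounded B \<Longrightarrow> measure M {\<omega>\<in>space M. card (Phi \<omega> \<inter> B) = k} =
        (kappa * measure lborel B) ^ k / fact k * exp (- (kappa * measure lborel B))"
  using assms unfolding poisson_point_process_def by blast+

lemma pois_series:
  fixes l :: real
  shows "(\<lambda>k. real k * (l^k / fact k * exp (-l))) sums l"
proof -
  have "(\<lambda>n. l^n /\<^sub>R fact n) sums exp l" by (rule exp_converges)
  then have "(\<lambda>n. l^n /\<^sub>R fact n * (l * exp (-l))) sums (exp l * (l * exp (-l)))"
    by (rule sums_mult2)
  also have "exp l * (l * exp (-l)) = l" by (simp add: exp_minus field_simps)
  finally have s: "(\<lambda>n. l^n /\<^sub>R fact n * (l * exp (-l))) sums l" .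
  have "(\<lambda>n. real (Suc n) * (l^(Suc n) / fact (Suc n) * exp (-l))) = (\<lambda>n. l^n /\<^sub>R fact n * (l * exp (-l)))"
  proof
    fix n
    have f: "fact (Suc n) = real (Suc n) * (fact n :: real)" by (rule fact_Suc)
    have "real (Suc n) * (l^(Suc n) / fact (Suc n) * exp (-l)) = (real (Suc n) / real (Suc n)) * (l^n / fact n) * (l * exp (-l))"
      unfolding f by (simp only: power_Suc) (simp add: field_simps del: of_nat_Suc)
    also have "\<dots> = l^n /\<^sub>R fact n * (l * exp (-l))" by (simp add: divide_inverse mult.commute mult.left_commute)
    finally show "real (Suc n) * (l^(Suc n) / fact (Suc n) * exp (-l)) = l^n /\<^sub>R fact n * (l * exp (-l))" .
  qed
  with s have "(\<lambda>n. real (Suc n) * (l^(Suc n) / fact (Suc n) * exp (-l))) sums l" by simp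
  then show ?thesis by (subst (asm) sums_Suc_iff) simp
qed

lemma pois_mean:
  assumes P: "poisson_point_process M Phi kappa" and k0: "0 \<le> kappa"
    and B: "B \<in> sets lborel" "bounded B"
  shows "integrable M (\<lambda>\<omega>. real (card (Phi \<omega> \<inter> B)))"
    "(\<integral>\<omega>. real (card (Phi \<omega> \<inter> B)) \<partial>M) = kappa * measure lborel B"
proof -
  interpret prob_space M using ppp_unfold(1)[OF P] .
  define N where "N \<omega> = card (Phi \<omega> \<inter> B)" for \<omega>
  define l where "l = kappa * measure lborel B"
  have l0: "0 \<le> l" unfolding l_def using k0 by simp
  have Nm[measurable]: "N \<in> measurable M (count_space UNIV)"
    unfolding N_def using ppp_unfold(3)[OF P B] .
  define A where "A k = {\<omega>\<in>space M. N \<omega> = k}" for k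
  have A[measurable]: "A k \<in> sets M" for k
    unfolding A_def by measurable
  have PA: "measure M (A k) = l^k / fact k * exp (-l)" for k
    unfolding A_def N_def l_def using ppp_unfold(4)[OF P B] .
  have rN[measurable]: "(\<lambda>\<omega>. real (N \<omega>)) \<in> borel_measurable M" by measurable
  have pt: "ennreal (real (N \<omega>)) = (\<Sum>k. ennreal (real k) * indicator (A k) \<omega>)" if "\<omega> \<in> space M" for \<omega>
  proof -
    have "(\<lambda>k. ennreal (real k) * indicator (A k) \<omega>) = (\<lambda>k. if k = N \<omega> then ennreal (real k) else 0)"
      using that by (auto simp: fun_eq_iff A_def indicator_def)
    moreover have "(\<lambda>k. if k = N \<omega> then ennreal (real k) else 0) sums ennreal (real (N \<omega>))"
      by (rule sums_single)
    ultimately show ?thesis by (simp add: sums_iff)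
  qed
  have "(\<integral>\<^sup>+\<omega>. ennreal (real (N \<omega>)) \<partial>M) = (\<integral>\<^sup>+\<omega>. (\<Sum>k. ennreal (real k) * indicator (A k) \<omega>) \<partial>M)"
    by (intro nn_integral_cong pt)
  also have "\<dots> = (\<Sum>k. \<integral>\<^sup>+\<omega>. ennreal (real k) * indicator (A k) \<omega> \<partial>M)"
    by (intro nn_integral_suminf) measurable
  also have "\<dots> = (\<Sum>k. ennreal (real k * (l^k / fact k * exp (-l))))"
  proof (intro suminf_cong)
    fix k
    have "(\<integral>\<^sup>+\<omega>. ennreal (real k) * indicator (A k) \<omega> \<partial>M) = ennreal (real k) * emeasure M (A k)"
      by (rule nn_integral_cmult_indicator) simp
    also have "\<dots> = ennreal (real k) * ennreal (l^k / fact k * exp (-l))"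
      by (simp add: emeasure_eq_measure PA)
    also have "\<dots> = ennreal (real k * (l^k / fact k * exp (-l)))"
      by (rule ennreal_mult'[symmetric]) simp
    finally show "(\<integral>\<^sup>+\<omega>. ennreal (real k) * indicator (A k) \<omega> \<partial>M) = ennreal (real k * (l^k / fact k * exp (-l)))" .
  qed
  also have "\<dots> = ennreal l"
    using pois_series[of l] l0 by (subst suminf_ennreal2) (auto simp: sums_iff)
  finally have nn: "(\<integral>\<^sup>+\<omega>. ennreal (real (N \<omega>)) \<partial>M) = ennreal l" .
  show "integrable M (\<lambda>\<omega>. real (card (Phi \<omega> \<inter> B)))"
    unfolding N_def[symmetric] by (rule integrableI_nonneg) (auto simp: nn)
  show "(\<integral>\<omega>. real (card (Phi \<omega> \<inter> B)) \<partial>M) = kappa * measure lborel B"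
    unfolding N_def[symmetric] l_def[symmetric] using l0 by (subst integral_eq_nn_integral) (auto simp: nn)
qed

lemma card_meas:
  assumes P: "poisson_point_process M Phi kappa" and C: "C \<in> sets lborel" "bounded C"
  shows "(\<lambda>\<omega>. real (card (Phi \<omega> \<inter> C))) \<in> borel_measurable M"
proof -
  have [measurable]: "(\<lambda>\<omega>. card (Phi \<omega> \<inter> C)) \<in> measurable M (count_space UNIV)"
    using ppp_unfold(3)[OF P C] .
  show ?thesis by measurable
qed

lemma sum_ind_real: "finite A \<Longrightarrow> (\<Sum>x\<in>A. indicator B x :: real) = real (card (A \<inter> B))"
  using sum.inter_restrict[of A "\<lambda>_. 1::real" B] by (simp add: indicator_def)

lemma campbell:
  fixes h :: "real^2 \<Rightarrow> 'b::{banach, second_countable_topology}"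
  assumes P: "poisson_point_process M Phi kappa" and k0: "0 \<le> kappa"
    and S: "S \<in> sets borel" "bounded S"
    and h[measurable]: "h \<in> borel_measurable borel"
    and hS: "\<And>x. x \<notin> S \<Longrightarrow> h x = 0"
    and hB: "\<And>x. norm (h x) \<le> Bd"
  shows "integrable M (\<lambda>\<omega>. \<Sum>p\<in>Phi \<omega> \<inter> S. h p)"
    "(\<integral>\<omega>. (\<Sum>p\<in>Phi \<omega> \<inter> S. h p) \<partial>M) = kappa *\<^sub>R (\<integral>p. h p \<partial>lborel)"
proof -
  interpret prob_space M using ppp_unfold(1)[OF P] .
  have hl: "h \<in> borel_measurable lborel" by simp
  obtain F where Fs: "\<And>i. simple_function lborel (F i)"
    and Fc: "\<And>x. (\<lambda>i. F i x) \<longlonglongrightarrow> h x"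
    and Fb: "\<And>i x. dist (F i x) 0 \<le> 2 * dist (h x) 0"
    using borel_measurable_implies_sequence_metric[OF hl, of 0] by auto
  have Fb': "norm (F i x) \<le> 2 * norm (h x)" for i x using Fb[of i x] by simp
  have F0: "F i x = 0" if "x \<notin> S" for i x using Fb'[of i x] hS[OF that] by simp
  have Fm[measurable]: "F i \<in> borel_measurable borel" for i
    using borel_measurable_simple_function[OF Fs[of i]] by simp
  define R where "R i = F i ` UNIV - {0}" for i
  have Rfin: "finite (R i)" for i
    using Fs[of i] unfolding R_def simple_function_def by auto
  define C where "C i y = F i -` {y}" for i y
  have CS: "C i y \<subseteq> S" if "y \<in> R i" for i y
    using that F0 unfolding C_def R_def by fastforce
  have Cb: "C i y \<in> sets lborel" for i y
    unfolding C_def using measurable_sets[OF Fm[of i], of "{y}"] by simp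
  have Cbd: "bounded (C i y)" if "y \<in> R i" for i y
    using CS[OF that] S(2) bounded_subset by blast
  have Frep: "F i p = (\<Sum>y\<in>R i. indicator (C i y) p *\<^sub>R y)" for i p
  proof -
    have "(\<Sum>y\<in>R i. indicator (C i y) p *\<^sub>R y) = (\<Sum>y\<in>R i. if y = F i p then y else 0)"
      by (intro sum.cong) (auto simp: C_def indicator_def)
    also have "\<dots> = (if F i p \<in> R i then F i p else 0)"
      using Rfin by (simp add: sum.delta')
    also have "\<dots> = F i p" by (auto simp: R_def)
    finally show ?thesis ..
  qed
  define s where "s i \<omega> = (\<Sum>p\<in>Phi \<omega> \<inter> S. F i p)" for i \<omega>
  define s' where "s' i \<omega> = (\<Sum>y\<in>R i. real (card (Phi \<omega> \<inter> C i y)) *\<^sub>R y)" for i \<omega>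
  have ss': "s i \<omega> = s' i \<omega>" if "\<omega> \<in> space M" for i \<omega>
  proof -
    have fin: "finite (Phi \<omega> \<inter> S)" using ppp_unfold(2)[OF P that S(2)] .
    have "s i \<omega> = (\<Sum>p\<in>Phi \<omega> \<inter> S. \<Sum>y\<in>R i. indicator (C i y) p *\<^sub>R y)"
      unfolding s_def using Frep by simp
    also have "\<dots> = (\<Sum>y\<in>R i. \<Sum>p\<in>Phi \<omega> \<inter> S. indicator (C i y) p *\<^sub>R y)"
      by (rule sum.swap)
    also have "\<dots> = (\<Sum>y\<in>R i. real (card (Phi \<omega> \<inter> S \<inter> C i y)) *\<^sub>R y)"
      using fin by (simp add: scaleR_sum_left[symmetric]) (intro sum.cong refl arg_cong2[where f=scaleR] sum_ind_real[OF fin])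
    also have "\<dots> = s' i \<omega>"
      unfolding s'_def using CS by (intro sum.cong refl) (metis Int_assoc inf.absorb_iff2)
    finally show ?thesis .
  qed
  have s'm[measurable]: "s' i \<in> borel_measurable M" for i
    unfolding s'_def
    by (intro borel_measurable_sum borel_measurable_scaleR card_meas[OF P Cb Cbd] borel_measurable_const)
  have sm: "s i \<in> borel_measurable M" for i
    using s'm[of i] by (rule measurable_cong[THEN iffD2, rotated]) (simp add: ss')
  have Es: "(\<integral>\<omega>. s i \<omega> \<partial>M) = kappa *\<^sub>R (\<integral>p. F i p \<partial>lborel)" for i
  proof -
    have "(\<integral>\<omega>. s i \<omega> \<partial>M) = (\<integral>\<omega>. s' i \<omega> \<partial>M)"
      by (intro Bochner_Integration.integral_cong ss') auto
    also have "\<dots> = (\<Sum>y\<in>R i. (\<integral>\<omega>. real (card (Phi \<omega> \<inter> C i y)) \<partial>M) *\<^sub>R y)"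
      unfolding s'_def
      by (subst Bochner_Integration.integral_sum)
         (auto intro!: integrable_scaleR_left pois_mean[OF P k0 Cb Cbd] simp: integral_scaleR_left pois_mean[OF P k0 Cb Cbd])
    also have "\<dots> = (\<Sum>y\<in>R i. (kappa * measure lborel (C i y)) *\<^sub>R y)"
      by (intro sum.cong refl) (simp add: pois_mean[OF P k0 Cb Cbd])
    also have "\<dots> = kappa *\<^sub>R (\<Sum>y\<in>R i. measure lborel (C i y) *\<^sub>R y)"
      by (simp add: scaleR_sum_right)
    also have "(\<Sum>y\<in>R i. measure lborel (C i y) *\<^sub>R y) = (\<integral>p. F i p \<partial>lborel)"
    proof -
      have "(\<integral>p. F i p \<partial>lborel) = (\<integral>p. (\<Sum>y\<in>R i. indicator (C i y) p *\<^sub>R y) \<partial>lborel)"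
        using Frep by simp
      also have "\<dots> = (\<Sum>y\<in>R i. (\<integral>p. indicator (C i y) p *\<^sub>R y \<partial>lborel))"
        by (rule Bochner_Integration.integral_sum)
           (auto intro!: integrable_scaleR_left integrable_real_indicator emeasure_bounded_finite Cbd Cb)
      also have "\<dots> = (\<Sum>y\<in>R i. measure lborel (C i y) *\<^sub>R y)"
      proof (intro sum.cong refl)
        fix y assume y: "y \<in> R i"
        have fin: "emeasure lborel (C i y) < \<infinity>" using emeasure_bounded_finite[OF Cbd[OF y]] .
        have "(\<integral>p. indicator (C i y) p *\<^sub>R y \<partial>lborel) = (\<integral>p. indicator (C i y) p \<partial>lborel) *\<^sub>R y"
          by (rule integral_scaleR_left) (intro integrable_real_indicator Cb fin)
        also have "(\<integral>p. indicator (C i y) p \<partial>lborel) = measure lborel (C i y)"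
          by (simp add: Bochner_Integration.integral_indicator)
        finally show "(\<integral>p. indicator (C i y) p *\<^sub>R y \<partial>lborel) = measure lborel (C i y) *\<^sub>R y" .
      qed
      finally show ?thesis ..
    qed
    finally show ?thesis .
  qed
  define f where "f \<omega> = (\<Sum>p\<in>Phi \<omega> \<inter> S. h p)" for \<omega>
  have slim: "(\<lambda>i. s i \<omega>) \<longlonglongrightarrow> f \<omega>" for \<omega>
    unfolding s_def f_def by (intro tendsto_sum Fc)
  have fm: "f \<in> borel_measurable M"
    by (rule borel_measurable_LIMSEQ_metric[OF sm slim])
  define w where "w \<omega> = 2 * Bd * real (card (Phi \<omega> \<inter> S))" for \<omega>
  have wi: "integrable M w"
    unfolding w_def using pois_mean(1)[OF P k0 _ S(2)] S(1) by simp
  have sb: "norm (s i \<omega>) \<le> w \<omega>" for i \<omega>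
  proof -
    have "norm (s i \<omega>) \<le> (\<Sum>p\<in>Phi \<omega> \<inter> S. 2 * Bd)"
      unfolding s_def by (intro sum_norm_le) (use Fb' hB in \<open>smt (verit)\<close>)
    also have "\<dots> = w \<omega>" by (simp add: w_def)
    finally show ?thesis .
  qed
  have intf: "integrable M f"
    by (rule integrable_dominated_convergence[where s=s, OF fm sm wi]) (use slim sb in auto)
  have limM: "(\<lambda>i. \<integral>\<omega>. s i \<omega> \<partial>M) \<longlonglongrightarrow> (\<integral>\<omega>. f \<omega> \<partial>M)"
    by (rule integral_dominated_convergence[where s=s, OF fm sm wi]) (use slim sb in auto)
  have limL: "(\<lambda>i. \<integral>p. F i p \<partial>lborel) \<longlonglongrightarrow> (\<integral>p. h p \<partial>lborel)"
  proof (rule integral_dominated_convergence[where w="\<lambda>x. 2 * Bd * indicator S x"])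
    show "integrable lborel (\<lambda>x. 2 * Bd * indicator S x)"
      using S by (intro integrable_mult_right integrable_real_indicator emeasure_bounded_finite) auto
    show "AE x in lborel. norm (F i x) \<le> 2 * Bd * indicator S x" for i
    proof (intro AE_I2)
      fix x show "norm (F i x) \<le> 2 * Bd * indicator S x"
        using Fb'[of i x] hB[of x] F0[of x i] by (cases "x \<in> S") auto
    qed
  qed (use Fc in auto)
  have "(\<lambda>i. \<integral>\<omega>. s i \<omega> \<partial>M) \<longlonglongrightarrow> kappa *\<^sub>R (\<integral>p. h p \<partial>lborel)"
    unfolding Es by (intro tendsto_scaleR tendsto_const limL)
  with limM have "(\<integral>\<omega>. f \<omega> \<partial>M) = kappa *\<^sub>R (\<integral>p. h p \<partial>lborel)"
    using LIMSEQ_unique by blast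
  then show "(\<integral>\<omega>. (\<Sum>p\<in>Phi \<omega> \<inter> S. h p) \<partial>M) = kappa *\<^sub>R (\<integral>p. h p \<partial>lborel)"
    unfolding f_def .
  show "integrable M (\<lambda>\<omega>. \<Sum>p\<in>Phi \<omega> \<inter> S. h p)" using intf unfolding f_def .
qed

lemma lborel_reflect_integral:
  fixes g :: "real^2 \<Rightarrow> 'b::{banach, second_countable_topology}"
  assumes g[measurable]: "g \<in> borel_measurable borel"
  shows "(\<integral>p. g (t - p) \<partial>lborel) = (\<integral>e. g e \<partial>lborel)"
proof -
  have e: "lborel = density (distr lborel borel (\<lambda>x::real^2. t + (-1) *\<^sub>R x)) (\<lambda>_. ennreal (\<bar>-1::real\<bar>^DIM(real^2)))"
    by (intro lborel_affine) auto
  have "(\<integral>e. g e \<partial>lborel) = (\<integral>e. g e \<partial>density (distr lborel borel (\<lambda>x::real^2. t + (-1) *\<^sub>R x)) (\<lambda>_. ennreal (\<bar>-1::real\<bar>^DIM(real^2))))"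
    by (rule arg_cong[where f="\<lambda>M. integral\<^sup>L M g", OF e])
  also have "\<dots> = (\<integral>e. g e \<partial>distr lborel borel (\<lambda>x::real^2. t + (-1) *\<^sub>R x))"
    by (simp add: density_1)
  also have "\<dots> = (\<integral>p. g (t + (-1) *\<^sub>R p) \<partial>lborel)"
    by (subst integral_distr) auto
  finally show ?thesis by simp
qed

theorem lemma7:
  fixes M :: "'s measure" and Phi :: "'s \<Rightarrow> (real^2) set"
    and kappa r0 R :: real and x v :: "real^2"
  assumes "poisson_point_process M Phi kappa"
    and "kappa > 0" and "0 < r0" and "r0 < R" and "v \<noteq> 0"
  shows "(\<lambda>T. lambda_min (A_tilde M Phi r0 R x v T) / real T)
           \<longlonglongrightarrow> pi * kappa * (1 / r0\<^sup>2 - 1 / R\<^sup>2) / 8"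
proof -
  note P = assms(1) and kp = assms(2) and r0 = assms(3) and rR = assms(4) and v = assms(5)
  define K where "K = Kmat r0 R v"
  define g where "g e = indicator (ann r0 R) e *\<^sub>R summand v e" for e
  have sc: "continuous_on (ann r0 R) (summand v)" using summand_cont[OF r0 v] .
  obtain Bd where Bd: "0 < Bd" "\<And>e. e \<in> ann r0 R \<Longrightarrow> norm (summand v e) \<le> Bd"
    using compact_imp_bounded[OF compact_continuous_image[OF sc ann_compact]]
    unfolding bounded_pos by auto
  have gm[measurable]: "g \<in> borel_measurable borel"
    unfolding g_def by (intro borel_measurable_continuous_on_indicator sc) simp
  have termeq: "(\<integral>\<omega>. (\<Sum>p\<in>{p \<in> Phi \<omega>. r0 \<le> norm ((x + real t *\<^sub>R v) - p) \<and>
                                     norm ((x + real t *\<^sub>R v) - p) \<le> R}.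
                       summand v ((x + real t *\<^sub>R v) - p)) \<partial>M) = kappa *\<^sub>R K" for t :: nat
  proof -
    define c where "c = x + real t *\<^sub>R v"
    define S where "S = {p. r0 \<le> norm (c - p) \<and> norm (c - p) \<le> R}"
    define h where "h p = g (c - p)" for p
    have S_eq: "S = (\<lambda>p. c - p) -` ann r0 R" by (auto simp: S_def ann_def)
    have Sb: "S \<in> sets borel" unfolding S_eq
      using measurable_sets[of "\<lambda>p. c - p" borel borel "ann r0 R"] by simp
    have Sbd: "bounded S"
    proof -
      have "S \<subseteq> cball c R" by (auto simp: S_def dist_norm)
      then show ?thesis using bounded_cball bounded_subset by blast
    qed
    have hm: "h \<in> borel_measurable borel" unfolding h_def by measurable
    have hS: "h p = 0" if "p \<notin> S" for p
      using that by (auto simp: h_def g_def S_def ann_def)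
    have hB: "norm (h p) \<le> Bd" for p
      using Bd by (cases "c - p \<in> ann r0 R") (auto simp: h_def g_def)
    have eqs: "(\<Sum>p\<in>{p \<in> Phi \<omega>. r0 \<le> norm (c - p) \<and> norm (c - p) \<le> R}. summand v (c - p)) =
        (\<Sum>p\<in>Phi \<omega> \<inter> S. h p)" for \<omega>
    proof -
      have "{p \<in> Phi \<omega>. r0 \<le> norm (c - p) \<and> norm (c - p) \<le> R} = Phi \<omega> \<inter> S" by (auto simp: S_def)
      moreover have "summand v (c - p) = h p" if "p \<in> Phi \<omega> \<inter> S" for p
        using that by (simp add: h_def g_def S_def ann_def)
      ultimately show ?thesis by simp
    qed
    have "(\<integral>\<omega>. (\<Sum>p\<in>{p \<in> Phi \<omega>. r0 \<le> norm (c - p) \<and> norm (c - p) \<le> R}. summand v (c - p)) \<partial>M)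
        = (\<integral>\<omega>. (\<Sum>p\<in>Phi \<omega> \<inter> S. h p) \<partial>M)" unfolding eqs ..
    also have "\<dots> = kappa *\<^sub>R (\<integral>p. h p \<partial>lborel)"
      using kp by (intro campbell(2)[OF P _ Sb Sbd hm hS hB]) auto
    also have "(\<integral>p. h p \<partial>lborel) = K"
      unfolding h_def K_def Kmat_def using lborel_reflect_integral[OF gm] by (simp add: g_def)
    finally show ?thesis unfolding c_def .
  qed
  have AT: "A_tilde M Phi r0 R x v T = (real T * kappa) *\<^sub>R K" for T
    unfolding A_tilde_def termeq by (simp only: sum_constant_scaleR card_atLeastAtMost) simp
  define u where "u = v /\<^sub>R norm v"
  define w where "w = (vector [- (u$2), u$1] :: real^2)"
  define d where "d = 1/r0^2 - 1/R^2"
  have d: "0 < d" unfolding d_def using r0 rR by (simp add: field_simps power_strict_mono)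
  note KU = Kmat_uw[OF r0 less_imp_le[OF rR] v, folded u_def, folded w_def, folded K_def]
  have ev: "lambda_min (A_tilde M Phi r0 R x v T) / real T = pi * kappa * (1 / r0\<^sup>2 - 1 / R\<^sup>2) / 8"
    if T: "T \<ge> 1" for T
  proof -
    have "lambda_min ((real T * kappa) *\<^sub>R K) = (real T * kappa) * (pi*d/8)"
    proof (rule lambda_min_eq[OF KU(3,4,5)])
      show "(real T * kappa) *\<^sub>R K *v u = ((real T * kappa) * (pi*d/8)) *\<^sub>R u"
        using KU(1) by (simp add: scaleR_matrix_vector_assoc[symmetric] d_def)
      show "(real T * kappa) *\<^sub>R K *v w = ((real T * kappa) * (3*pi*d/8)) *\<^sub>R w"
        using KU(2) by (simp add: scaleR_matrix_vector_assoc[symmetric] d_def)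
      show "(real T * kappa) * (pi*d/8) \<le> (real T * kappa) * (3*pi*d/8)"
        using kp d by (intro mult_left_mono) auto
    qed
    then show ?thesis unfolding AT using T by (simp add: d_def)
  qed
  show ?thesis
    by (rule tendsto_eventually) (use ev in \<open>auto simp: eventually_sequentially\<close>)
qed

end
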